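(* There exist absolute constants $\eta,c,C',A_1,A_2>0$ such that the following holds. Let $k\ge 3$ and $n>\eta k$ be such that $M=\frac{3.5\,k\log k}{n}$ is an integer. Define $u_j=(-1)^{M+1}\frac{j!}{M!}\big(\frac kn\big)^j s(M+1,j+1)$ for $1\le j\le M$ and $u_j=0$ otherwise; equivalently $u_j=w_j\,j!\,(\frac{k}{nM})^j$ where $w\in\mathbb{R}^M$ is the unique vector with $\sum_{j=1}^Mw_jx^j=1$ for all $x\in\{1/M,2/M,\dots,1\}$. Let $\tilde C=\hat C_{\rm seen}+\sum_{j\ge1}u_j\Phi_j$ and $\hat C=\min\{\max\{\tilde C,\hat C_{\rm seen}\},k\}$. Then under the Poisson sampling model, for every urn of $k$ balls, $$\mathbb{E}(\hat C-C)^2\le ke^{-cn/k}+k^{-0.5-3.5\frac kn\log\frac{k}{en}}+R,$$ where $R=k\exp\big(\frac{k^2\log k}{n^2}e^{-cn/k}\big)$ if $n\le A_1k\log\log k$; $R=k\big(C'\frac kn\log\frac{k^2\log k}{n^2}\big)^{2n/k}$ if $A_1k\log\log k\le n\le A_2k\sqrt{\log k}$; and $R=0$ if $n\ge A_2k\sqrt{\log k}$.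
   Context: An urn contains $k$ colored balls; $k_i$ is the number of balls of color $i$ and $C$ the number of distinct colors. Poisson sampling model: $N\sim\mathrm{Poi}(n)$ balls are drawn uniformly at random with replacement, independently of $N$; equivalently the histograms $N_i$ are independent $\mathrm{Poi}(nk_i/k)$. Fingerprints $\Phi_j=\#\{i:N_i=j\}$; $\hat C_{\rm seen}=\sum_{j\ge1}\Phi_j$. Stirling numbers of the first kind $s(a,b)$ are defined by $x(x-1)\cdots(x-a+1)=\sum_{b}s(a,b)x^b$. Logarithms are natural. (The paper states the case distinctions with $\lesssim$ and exponents with $\Theta(\cdot)$; these are expressed here through absolute constants.) *)

theory Defs
  imports "HOL-Probability.Probability" "HOL-Computational_Algebra.Polynomial"
begin

definition stirling1s :: "nat \<Rightarrow> nat \<Rightarrow> int" where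
  "stirling1s a b = coeff (\<Prod>i<a. [:- of_nat i, 1:]) b"

definition fingerprint :: "nat set \<Rightarrow> (nat \<Rightarrow> nat) \<Rightarrow> nat \<Rightarrow> nat" where
  "fingerprint I N j = card {i \<in> I. N i = j}"

definition C_seen :: "nat set \<Rightarrow> (nat \<Rightarrow> nat) \<Rightarrow> nat" where
  "C_seen I N = (\<Sum>j\<in>{1..Max (insert 0 (N ` I))}. fingerprint I N j)"

definition coef_u :: "nat \<Rightarrow> nat \<Rightarrow> real \<Rightarrow> nat \<Rightarrow> real" where
  "coef_u M k n j = (if 1 \<le> j \<and> j \<le> M then
      (-1) ^ (M + 1) * (fact j / fact M) * (real k / n) ^ j * of_int (stirling1s (M + 1) (j + 1))
    else 0)"

text \<open>C tilde = C_seen + sum_{j>=1} u_j Phi_j (only j<=M contribute).\<close>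
definition C_tilde :: "nat \<Rightarrow> nat \<Rightarrow> real \<Rightarrow> nat set \<Rightarrow> (nat \<Rightarrow> nat) \<Rightarrow> real" where
  "C_tilde M k n I N = real (C_seen I N) + (\<Sum>j\<in>{1..M}. coef_u M k n j * real (fingerprint I N j))"

definition C_hat :: "nat \<Rightarrow> nat \<Rightarrow> real \<Rightarrow> nat set \<Rightarrow> (nat \<Rightarrow> nat) \<Rightarrow> real" where
  "C_hat M k n I N = min (max (C_tilde M k n I N) (real (C_seen I N))) (real k)"

text \<open>Poisson sampling model: histograms N_i independent Poi(n k_i / k) for colours i in I
  (and N_i = 0 for non-colours).\<close>
definition poisson_hist :: "nat set \<Rightarrow> (nat \<Rightarrow> nat) \<Rightarrow> nat \<Rightarrow> real \<Rightarrow> (nat \<Rightarrow> nat) pmf" where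
  "poisson_hist I kc k n = Pi_pmf I 0 (\<lambda>i. poisson_pmf (n * real (kc i) / real k))"

end

theory Submission
  imports Defs
begin



lemma pow_fact_le_exp: "0 \<le> (x::real) \<Longrightarrow> x ^ n / fact n \<le> exp x"
proof -
  assume x: "0 \<le> x"
  have s: "summable (\<lambda>i. x ^ i /\<^sub>R fact i)" by (rule summable_exp_generic)
  have "(\<Sum>i\<in>{n}. x ^ i /\<^sub>R fact i) \<le> (\<Sum>i. x ^ i /\<^sub>R fact i)"
    by (rule sum_le_suminf[OF s]) (use x in auto)
  then show ?thesis by (simp add: exp_def divide_inverse mult.commute)
qed

lemma ln_le_div_e: "0 < (y::real) \<Longrightarrow> ln y \<le> y / exp 1"
proof -
  assume y: "0 < y"
  have "ln (y / exp 1) \<le> y / exp 1 - 1" using y by (intro ln_le_minus_one) auto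
  moreover have "ln (y / exp 1) = ln y - 1" using y by (simp add: ln_div)
  ultimately show ?thesis by simp
qed

lemma pow_le_exp_e: "0 \<le> (B::real) \<Longrightarrow> 1 \<le> j \<Longrightarrow> (B / real j) ^ j \<le> exp (B / exp 1)"
proof -
  assume B: "0 \<le> B" and j: "1 \<le> j"
  show ?thesis
  proof (cases "B = 0")
    case True then show ?thesis using j by (simp add: power_0_left)
  next
    case False
    then have Bp: "0 < B" using B by simp
    have yp: "0 < B / real j" using Bp j by simp
    have "(B / real j) ^ j = exp (real j * ln (B / real j))"
      using yp by (simp add: exp_of_nat_mult)
    also have "\<dots> \<le> exp (real j * ((B / real j) / exp 1))"
      using ln_le_div_e[OF yp] j by (intro exp_mono mult_left_mono) auto
    also have "real j * ((B / real j) / exp 1) = B / exp 1" using j by simp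
    finally show ?thesis .
  qed
qed

lemma harm_tail: "1 \<le> K \<Longrightarrow> K \<le> M \<Longrightarrow> (\<Sum>m\<in>{K<..M}. 1 / real m) \<le> ln (real M) - ln (real K)"
proof (induction M)
  case 0 then show ?case by simp
next
  case (Suc M)
  show ?case
  proof (cases "K = Suc M")
    case True then show ?thesis by simp
  next
    case False
    then have KM: "K \<le> M" using Suc.prems by simp
    have IH: "(\<Sum>m\<in>{K<..M}. 1 / real m) \<le> ln (real M) - ln (real K)" using Suc.IH Suc.prems KM by simp
    have Mp: "0 < real M" using KM Suc.prems by simp
    have "ln (real M / real (Suc M)) \<le> real M / real (Suc M) - 1"
      using Mp by (intro ln_le_minus_one) auto
    moreover have "ln (real M / real (Suc M)) = ln (real M) - ln (real (Suc M))"
      using Mp by (simp add: ln_div)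
    moreover have "real M / real (Suc M) - 1 = - (1 / real (Suc M))" by (simp add: field_simps)
    ultimately have st: "1 / real (Suc M) \<le> ln (real (Suc M)) - ln (real M)" by linarith
    have "{K<..Suc M} = insert (Suc M) {K<..M}" using KM by auto
    then have "(\<Sum>m\<in>{K<..Suc M}. 1 / real m) = 1 / real (Suc M) + (\<Sum>m\<in>{K<..M}. 1 / real m)"
      by simp
    then show ?thesis using IH st by linarith
  qed
qed




lemma prod_head_bound:
  assumes x: "0 \<le> (x::real)" and K: "1 \<le> K"
  shows "(\<Prod>m\<in>{1..K}. 1 + x / real m) \<le> exp (x + real K)"
proof -
  have eq: "(\<Prod>m\<in>{1..K}. 1 + x / real m) = (\<Prod>m\<in>{1..K}. (real m + x) / real K) * (\<Prod>m\<in>{1..K}. real K / real m)"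
    by (subst prod.distrib[symmetric], rule prod.cong) (auto simp: field_simps)
  have h1: "(\<Prod>m\<in>{1..K}. (real m + x) / real K) \<le> (\<Prod>m\<in>{1..K}. exp (x / real K))"
  proof (rule prod_mono)
    fix m assume m: "m \<in> {1..K}"
    have "(real m + x) / real K \<le> exp ((real m + x) / real K - 1)"
      using exp_ge_add_one_self[of "(real m + x) / real K - 1"] by simp
    also have "\<dots> \<le> exp (x / real K)"
      using m K by (intro exp_mono) (auto simp: field_simps)
    finally show "0 \<le> (real m + x) / real K \<and> (real m + x) / real K \<le> exp (x / real K)"
      using x by auto
  qed
  have h1': "(\<Prod>m\<in>{1..K}. exp (x / real K)) = exp x"
    using K by (simp add: exp_of_nat_mult[symmetric])
  have h2: "(\<Prod>m\<in>{1..K}. real K / real m) = real K ^ K / fact K"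
    by (simp add: prod_dividef fact_prod)
  have h3: "real K ^ K / fact K \<le> exp (real K)" by (rule pow_fact_le_exp) simp
  have "(\<Prod>m\<in>{1..K}. 1 + x / real m) \<le> exp x * exp (real K)"
    unfolding eq
    apply (rule mult_mono)
    using h1 h1' h2 h3 by (auto intro!: prod_nonneg simp: x)
  then show ?thesis by (simp add: exp_add)
qed

lemma prod_bound:
  assumes x: "0 \<le> (x::real)" and K: "1 \<le> K" and KM: "K \<le> M"
  shows "(\<Prod>m\<in>{1..M}. 1 + x / real m) \<le> exp (x + real K + x * (ln (real M) - ln (real K)))"
proof -
  have un: "{1..M} = {1..K} \<union> {K<..M}" using K KM by auto
  have "(\<Prod>m\<in>{1..M}. 1 + x / real m) = (\<Prod>m\<in>{1..K}. 1 + x / real m) * (\<Prod>m\<in>{K<..M}. 1 + x / real m)"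
    unfolding un by (rule prod.union_disjoint) auto
  also have "\<dots> \<le> exp (x + real K) * exp (x * (ln (real M) - ln (real K)))"
  proof (rule mult_mono)
    show "(\<Prod>m\<in>{1..K}. 1 + x / real m) \<le> exp (x + real K)" by (rule prod_head_bound[OF x K])
    have "(\<Prod>m\<in>{K<..M}. 1 + x / real m) \<le> exp (\<Sum>m\<in>{K<..M}. x / real m)"
      by (rule prod_le_exp_sum) (use x in auto)
    also have "(\<Sum>m\<in>{K<..M}. x / real m) = x * (\<Sum>m\<in>{K<..M}. 1 / real m)"
      by (simp add: sum_distrib_left)
    also have "exp \<dots> \<le> exp (x * (ln (real M) - ln (real K)))"
      by (intro exp_mono mult_left_mono harm_tail K KM x)
    finally show "(\<Prod>m\<in>{K<..M}. 1 + x / real m) \<le> exp (x * (ln (real M) - ln (real K)))" .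
  qed (use x in \<open>auto intro!: prod_nonneg\<close>)
  finally show ?thesis by (simp add: exp_add[symmetric] add.assoc)
qed




definition Qm :: "nat \<Rightarrow> int poly" where "Qm M = (\<Prod>i<M. [:- of_nat i - 1, 1:])"
definition Qp :: "nat \<Rightarrow> real poly" where "Qp M = (\<Prod>i<M. [:of_nat i + 1, 1:])"

lemma stirling_Qm: "stirling1s (Suc M) (Suc j) = coeff (Qm M) j"
proof -
  have "(\<Prod>i<Suc M. [:- (of_nat i :: int), 1:]) = [:0, 1:] * (\<Prod>i<M. [:- of_nat (Suc i), 1:])"
    by (subst prod.lessThan_Suc_shift) simp
  also have "(\<Prod>i<M. [:- of_nat (Suc i) :: int, 1:]) = Qm M"
    unfolding Qm_def by (rule prod.cong) auto
  finally show ?thesis unfolding stirling1s_def by (simp add: mult_pCons_left)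
qed

lemma mult_lin_coeff: "coeff ((p :: 'a :: comm_ring_1 poly) * [:c, 1:]) j = c * coeff p j + (case j of 0 \<Rightarrow> 0 | Suc j' \<Rightarrow> coeff p j')"
  by (cases j) (simp_all add: mult_pCons_right)

lemma Qm_Qp_coeff: "\<bar>real_of_int (coeff (Qm M) j)\<bar> \<le> coeff (Qp M) j \<and> 0 \<le> coeff (Qp M) j"
proof (induction M arbitrary: j)
  case 0 then show ?case by (simp add: Qm_def Qp_def coeff_1)
next
  case (Suc M)
  have m: "Qm (Suc M) = Qm M * [:- of_nat M - 1, 1:]" by (simp add: Qm_def)
  have p: "Qp (Suc M) = Qp M * [:of_nat M + 1, 1:]" by (simp add: Qp_def)
  show ?case
  proof (cases j)
    case 0
    have a: "\<bar>real_of_int (coeff (Qm M) 0)\<bar> \<le> coeff (Qp M) 0" "0 \<le> coeff (Qp M) 0"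
      using Suc.IH[of 0] by auto
    have "\<bar>real_of_int ((- of_nat M - 1) * coeff (Qm M) 0)\<bar> = (real M + 1) * \<bar>real_of_int (coeff (Qm M) 0)\<bar>"
      by (simp add: abs_mult)
    also have "\<dots> \<le> (real M + 1) * coeff (Qp M) 0"
      using a by (intro mult_left_mono) auto
    finally show ?thesis unfolding m p mult_lin_coeff using 0 a by simp
  next
    case (Suc j')
    have a: "\<bar>real_of_int (coeff (Qm M) j)\<bar> \<le> coeff (Qp M) j" "0 \<le> coeff (Qp M) j"
      using Suc.IH[of j] by auto
    have b: "\<bar>real_of_int (coeff (Qm M) j')\<bar> \<le> coeff (Qp M) j'" "0 \<le> coeff (Qp M) j'"
      using Suc.IH[of j'] by auto
    have "\<bar>real_of_int ((- of_nat M - 1) * coeff (Qm M) j + coeff (Qm M) j')\<bar>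
          \<le> (real M + 1) * \<bar>real_of_int (coeff (Qm M) j)\<bar> + \<bar>real_of_int (coeff (Qm M) j')\<bar>"
    proof -
      have "\<bar>real_of_int ((- of_nat M - 1) * coeff (Qm M) j + coeff (Qm M) j')\<bar>
         = \<bar>(- real M - 1) * real_of_int (coeff (Qm M) j) + real_of_int (coeff (Qm M) j')\<bar>" by simp
      also have "\<dots> \<le> \<bar>(- real M - 1) * real_of_int (coeff (Qm M) j)\<bar> + \<bar>real_of_int (coeff (Qm M) j')\<bar>"
        by (rule abs_triangle_ineq)
      also have "\<bar>(- real M - 1) * real_of_int (coeff (Qm M) j)\<bar> = (real M + 1) * \<bar>real_of_int (coeff (Qm M) j)\<bar>"
        by (simp add: abs_mult)
      finally show ?thesis .
    qed
    also have "\<dots> \<le> (real M + 1) * coeff (Qp M) j + coeff (Qp M) j'"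
      using a b by (intro add_mono mult_left_mono) auto
    finally show ?thesis unfolding m p mult_lin_coeff using Suc a b by simp
  qed
qed

lemma poly_Qp: "poly (Qp M) x = (\<Prod>i<M. x + real i + 1)"
  by (simp add: Qp_def poly_prod add.commute add.left_commute)

lemma coeff_Qp_le:
  assumes x: "0 \<le> (x::real)"
  shows "coeff (Qp M) j * x ^ j \<le> (\<Prod>i<M. x + real i + 1)"
proof (cases "j \<le> degree (Qp M)")
  case True
  have "coeff (Qp M) j * x ^ j \<le> (\<Sum>i\<le>degree (Qp M). coeff (Qp M) i * x ^ i)"
    by (rule member_le_sum) (use True x Qm_Qp_coeff in auto)
  then show ?thesis by (simp add: poly_altdef[symmetric] poly_Qp)
next
  case False
  then have "coeff (Qp M) j = 0" by (simp add: coeff_eq_0)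
  then show ?thesis using x by (simp add: prod_nonneg)
qed

lemma degree_Qm: "degree (Qm M) \<le> M"
proof -
  have "degree (Qm M) \<le> (\<Sum>i<M. degree [:- of_nat i - 1 :: int, 1:])"
    unfolding Qm_def using degree_prod_sum_le[of "{..<M}" "\<lambda>i. [:- of_nat i - 1 :: int, 1:]"] by (simp add: o_def)
  also have "\<dots> = M" by simp
  finally show ?thesis .
qed

lemma sum_Qm: "(\<Sum>j\<le>M. coeff (Qm M) j * z ^ j) = (\<Prod>i<M. z - of_nat i - 1)"
proof -
  have "(\<Sum>j\<le>M. coeff (Qm M) j * z ^ j) = (\<Sum>j\<le>degree (Qm M). coeff (Qm M) j * z ^ j)"
    by (rule sum.mono_neutral_right) (auto simp: degree_Qm coeff_eq_0)
  also have "\<dots> = poly (Qm M) z" by (simp add: poly_altdef)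
  also have "\<dots> = (\<Prod>i<M. z - of_nat i - 1)" unfolding Qm_def poly_prod by (intro prod.cong) auto
  finally show ?thesis .
qed

lemma coeff0_Qm: "coeff (Qm M) 0 = (-1) ^ M * fact M"
proof -
  have "coeff (Qm M) 0 = poly (Qm M) 0" by (simp add: poly_0_coeff_0)
  also have "\<dots> = (\<Prod>i<M. - of_nat i - 1)" by (simp add: Qm_def poly_prod)
  also have "\<dots> = (-1) ^ M * fact M"
    by (induction M) (auto simp: algebra_simps)
  finally show ?thesis .
qed




lemma term_bound:
  fixes t a L K c :: real and j M :: nat
  assumes t: "40 \<le> t" and a: "1 \<le> a" and j: "1 \<le> j" and L: "0 \<le> L" "L \<le> t / 4" and K: "0 \<le> K"
    and cb: "\<And>x. 0 < x \<Longrightarrow> \<bar>c\<bar> \<le> fact M * exp (x + K + x * L) / x ^ j"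
  shows "((fact j / fact M) * (1 / t) ^ j * c)\<^sup>2 * ((t * a) ^ j / fact j * exp (- (t * a)))
           \<le> exp (2 * K - 3 * t * a / 4)"
proof -
  define x where "x = real j / (1 + L)"
  have xp: "0 < x" using j L by (simp add: x_def)
  have xj0: "x * (1 + L) = real j" using L unfolding x_def by simp
  have xj: "x + x * L = real j" using xj0 by (simp add: distrib_left)
  have c1: "\<bar>c\<bar> \<le> fact M * exp (real j + K) / x ^ j"
  proof -
    have e: "x + K + x * L = real j + K" using xj by simp
    from cb[OF xp] show ?thesis unfolding e .
  qed
  have tp: "0 < t" using t by simp
  define U where "U = (fact j / fact M) * (1 / t) ^ j * \<bar>c\<bar>"
  have U0: "0 \<le> U" using tp by (simp add: U_def)
  have U1: "U \<le> fact j * exp (real j + K) / (t * x) ^ j"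
  proof -
    have "U \<le> (fact j / fact M) * (1 / t) ^ j * (fact M * exp (real j + K) / x ^ j)"
      unfolding U_def by (intro mult_left_mono c1) (use tp in auto)
    also have "\<dots> = fact j * exp (real j + K) / (t * x) ^ j"
      by (simp add: field_simps power_mult_distrib)
    finally show ?thesis .
  qed
  have sq: "((fact j / fact M) * (1 / t) ^ j * c)\<^sup>2 = U\<^sup>2"
  proof -
    have "U = \<bar>(fact j / fact M) * (1 / t) ^ j * c\<bar>" using tp by (simp add: U_def abs_mult)
    then show ?thesis by (simp only: power2_abs)
  qed
  define P where "P = (t * a) ^ j / fact j * exp (- (t * a))"
  have P0: "0 \<le> P" using tp a by (simp add: P_def)
  have "U\<^sup>2 * P \<le> (fact j * exp (real j + K) / (t * x) ^ j)\<^sup>2 * P"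
    by (intro mult_right_mono power_mono U1 U0 P0)
  also have "\<dots> = fact j * (exp 1 ^ 2 * a / (t * x\<^sup>2)) ^ j * exp (2 * K - t * a)"
  proof -
    have f: "(fact j :: real) \<noteq> 0" by simp
    have r1: "((t * a) / (t * x)\<^sup>2) ^ j = (t * a) ^ j / ((t * x) ^ j)\<^sup>2"
      by (simp add: power_divide power_mult[symmetric] mult.commute)
    have A: "(fact j * exp (real j + K) / (t * x) ^ j)\<^sup>2 * P
       = fact j * ((exp (real j + K))\<^sup>2 * ((t * a) / (t * x)\<^sup>2) ^ j) * exp (- (t * a))"
      unfolding P_def r1 using f by (simp add: power_divide power2_eq_square field_simps)
    have B: "(t * a) / (t * x)\<^sup>2 = a / (t * x\<^sup>2)" using tp xp by (simp add: power2_eq_square field_simps)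
    have C: "(exp (real j + K))\<^sup>2 = (exp 1 ^ 2) ^ j * exp (2 * K)"
    proof -
      have "exp (real j + K) = exp 1 ^ j * exp K" by (simp add: exp_add exp_of_nat_mult[symmetric])
      moreover have "exp (2 * K) = exp K ^ 2" by (simp add: exp_of_nat_mult[symmetric])
      ultimately show ?thesis by (simp add: power_mult_distrib power_mult[symmetric] mult.commute)
    qed
    have e2: "exp (2 * K - t * a) = exp (2 * K) * exp (- (t * a))" by (simp add: exp_diff exp_minus field_simps)
    have D: "(exp 1 ^ 2) ^ j * (a / (t * x\<^sup>2)) ^ j = (exp 1 ^ 2 * a / (t * x\<^sup>2)) ^ j"
      by (simp add: power_mult_distrib[symmetric] times_divide_eq_right)
    show ?thesis unfolding A B C e2 using D by (simp add: mult.assoc)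
  qed
  also have "\<dots> \<le> (real j) ^ j * (exp 1 ^ 2 * a / (t * x\<^sup>2)) ^ j * exp (2 * K - t * a)"
    by (intro mult_right_mono) (use fact_le_power[of j] xp tp a in auto)
  also have "(real j) ^ j * (exp 1 ^ 2 * a / (t * x\<^sup>2)) ^ j = (exp 1 ^ 2 * a * (1 + L)\<^sup>2 / t / real j) ^ j"
  proof -
    have "real j * (exp 1 ^ 2 * a / (t * x\<^sup>2)) = exp 1 ^ 2 * a * (1 + L)\<^sup>2 / t / real j"
      using j L tp by (simp add: x_def field_simps power2_eq_square)
    then show ?thesis by (simp add: power_mult_distrib[symmetric])
  qed
  also have "(exp 1 ^ 2 * a * (1 + L)\<^sup>2 / t / real j) ^ j \<le> exp (exp 1 ^ 2 * a * (1 + L)\<^sup>2 / t / exp 1)"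
    by (rule pow_le_exp_e) (use j a tp in auto)
  also have "exp (exp 1 ^ 2 * a * (1 + L)\<^sup>2 / t / exp 1) \<le> exp (t * a / 4)"
  proof -
    have e: "exp 1 \<le> (3::real)" using exp_le by simp
    have l: "1 + L \<le> 0.28 * t" using L t by simp
    have l2: "(1 + L)\<^sup>2 \<le> (0.28 * t)\<^sup>2" by (rule power_mono[OF l]) (use L in simp)
    have "exp 1 ^ 2 * a * (1 + L)\<^sup>2 / t / exp 1 = exp 1 * a * (1 + L)\<^sup>2 / t"
      by (simp add: power2_eq_square)
    also have "\<dots> \<le> 3 * a * (0.28 * t)\<^sup>2 / t"
      by (intro divide_right_mono mult_mono e l2) (use a tp in auto)
    also have "\<dots> \<le> t * a / 4" using tp a by (simp add: power2_eq_square field_simps)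
    finally show ?thesis by simp
  qed
  finally have "U\<^sup>2 * P \<le> exp (t * a / 4) * exp (2 * K - t * a)" by (simp add: mult_right_mono)
  also have "\<dots> = exp (2 * K - 3 * t * a / 4)" by (simp add: exp_add[symmetric])
  finally show ?thesis unfolding sq P_def .
qed




definition ff :: "nat \<Rightarrow> nat \<Rightarrow> real \<Rightarrow> nat \<Rightarrow> real" where
  "ff M k n j = coef_u M k n j - (if j = 0 then 1 else 0)"

lemma ff_zero: "M < j \<Longrightarrow> ff M k n j = 0"
  by (simp add: ff_def coef_u_def)

lemma ff_0: "ff M k n 0 = -1"
  by (simp add: ff_def coef_u_def)

lemma coef_u_eq: "1 \<le> j \<Longrightarrow> j \<le> M \<Longrightarrow>
   coef_u M k n j = (-1) ^ (M + 1) * (fact j / fact M) * (real k / n) ^ j * real_of_int (coeff (Qm M) j)"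
  using stirling_Qm[of M j] by (simp add: coef_u_def)

lemma expect_finite:
  assumes "\<And>j. M < j \<Longrightarrow> g j = 0"
  shows "measure_pmf.expectation (p :: nat pmf) g = (\<Sum>j\<le>M. g j * pmf p j)"
  by (rule integral_measure_pmf_real) (use assms in \<open>auto simp: not_less[symmetric]\<close>)

lemma sum_c: "(\<Sum>j\<le>M. real_of_int (coeff (Qm M) j) * real a ^ j) = (\<Prod>i<M. real a - real i - 1)"
proof -
  have "(\<Sum>j\<le>M. real_of_int (coeff (Qm M) j) * real a ^ j) = real_of_int (\<Sum>j\<le>M. coeff (Qm M) j * int a ^ j)"
    by simp
  also have "\<dots> = real_of_int (\<Prod>i<M. int a - int i - 1)" by (simp only: sum_Qm)
  also have "\<dots> = (\<Prod>i<M. real a - real i - 1)" by simp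
  finally show ?thesis .
qed

lemma mean_ff:
  assumes n: "0 < n" and k: "0 < k" and a: "1 \<le> a"
  shows "measure_pmf.expectation (poisson_pmf (n * real a / real k)) (ff M k n)
       = exp (- (n * real a / real k)) * ((-1) ^ (M + 1) * (\<Prod>i<M. real a - real i - 1) / fact M)"
proof -
  define l where "l = n * real a / real k"
  have lp: "0 < l" using n k a by (simp add: l_def)
  define s :: real where "s = (-1) ^ (M + 1)"
  define c where "c j = real_of_int (coeff (Qm M) j)" for j
  have E: "measure_pmf.expectation (poisson_pmf l) (ff M k n) = (\<Sum>j\<le>M. ff M k n j * (l ^ j / fact j * exp (- l)))"
    by (subst expect_finite[where M = M]) (use lp in \<open>auto simp: ff_zero\<close>)
  have trm: "ff M k n j * (l ^ j / fact j) = s / fact M * (c j * real a ^ j) + (if j = 0 then -1 - s / fact M * c 0 else 0)"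
    if j: "j \<le> M" for j
  proof (cases "j = 0")
    case True then show ?thesis by (simp add: ff_0)
  next
    case False
    have kl: "real k / n * l = real a" using n k by (simp add: l_def)
    have "ff M k n j * (l ^ j / fact j) = s * (fact j / fact M) * (real k / n) ^ j * c j * (l ^ j / fact j)"
      using False j by (simp add: ff_def coef_u_eq s_def c_def)
    also have "\<dots> = s / fact M * (c j * (real k / n * l) ^ j)"
      by (simp add: power_mult_distrib field_simps)
    also have "\<dots> = s / fact M * (c j * real a ^ j)" by (simp only: kl)
    finally show ?thesis using False by simp
  qed
  have "(\<Sum>j\<le>M. ff M k n j * (l ^ j / fact j * exp (- l)))
        = exp (- l) * (\<Sum>j\<le>M. ff M k n j * (l ^ j / fact j))"
    by (simp add: sum_distrib_left mult_ac)
  also have "(\<Sum>j\<le>M. ff M k n j * (l ^ j / fact j))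
        = (\<Sum>j\<le>M. s / fact M * (c j * real a ^ j) + (if j = 0 then -1 - s / fact M * c 0 else 0))"
    by (rule sum.cong[OF refl], rule trm) simp
  also have "\<dots> = s / fact M * (\<Sum>j\<le>M. c j * real a ^ j) + (-1 - s / fact M * c 0)"
    by (simp add: sum.distrib sum_distrib_left)
  also have "s / fact M * c 0 = -1"
    by (simp add: s_def c_def coeff0_Qm power_add)
  also have "(\<Sum>j\<le>M. c j * real a ^ j) = (\<Prod>i<M. real a - real i - 1)"
    unfolding c_def by (rule sum_c)
  finally show ?thesis using E by (simp add: l_def s_def)
qed

lemma bias_bound:
  assumes n: "0 < n" and k: "0 < k" and a: "1 \<le> a" and t: "1 \<le> n / real k"
  shows "\<bar>measure_pmf.expectation (poisson_pmf (n * real a / real k)) (ff M k n)\<bar>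
       \<le> exp (- (n / real k - 1) * (real M + 1))"
proof (cases "a \<le> M")
  case True
  have pz: "(\<Prod>i<M. real a - real i - 1) = 0"
    by (rule prod_zero) (use True a in \<open>auto simp: of_nat_diff intro!: bexI[where x="a - 1"]\<close>)
  show ?thesis unfolding mean_ff[OF n k a] pz by simp
next
  case False
  have aM: "real M + 1 \<le> real a" using False by simp
  have pa: "\<bar>\<Prod>i<M. real a - real i - 1\<bar> \<le> real a ^ M"
  proof -
    have "\<bar>\<Prod>i<M. real a - real i - 1\<bar> = (\<Prod>i<M. \<bar>real a - real i - 1\<bar>)" by (rule abs_prod)
    also have "\<dots> \<le> (\<Prod>i<M. real a)" by (rule prod_mono) (use False in auto)
    finally show ?thesis by simp
  qed
  define t where "t = n / real k"
  have l: "n * real a / real k = t * real a" by (simp add: t_def)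
  have mf: "measure_pmf.expectation (poisson_pmf (t * real a)) (ff M k n)
       = exp (- (t * real a)) * ((-1) ^ (M + 1) * (\<Prod>i<M. real a - real i - 1) / fact M)"
    using mean_ff[OF n k a] unfolding l .
  have "\<bar>measure_pmf.expectation (poisson_pmf (n * real a / real k)) (ff M k n)\<bar>
        = exp (- (t * real a)) * (\<bar>\<Prod>i<M. real a - real i - 1\<bar> / fact M)"
    unfolding l mf by (simp add: abs_mult)
  also have "\<dots> \<le> exp (- (t * real a)) * (real a ^ M / fact M)"
    by (intro mult_left_mono divide_right_mono pa) auto
  also have "\<dots> \<le> exp (- (t * real a)) * exp (real a)"
    by (intro mult_left_mono pow_fact_le_exp) auto
  also have "\<dots> = exp (- (t - 1) * real a)" by (simp add: exp_add[symmetric] algebra_simps)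
  also have "\<dots> \<le> exp (- (t - 1) * (real M + 1))"
  proof -
    have "(t - 1) * (real M + 1) \<le> (t - 1) * real a" using aM t by (intro mult_left_mono) (auto simp: t_def)
    then show ?thesis by (intro exp_mono) linarith
  qed
  finally show ?thesis by (simp add: t_def)
qed




lemma prod_reindex_fact: "(\<Prod>i<M. x + real i + 1) = fact M * (\<Prod>m\<in>{1..M}. 1 + x / real m)"
proof (induction M)
  case 0 then show ?case by simp
next
  case (Suc M)
  have s: "{1..Suc M} = insert (Suc M) {1..M}" by auto
  have "(\<Prod>i<Suc M. x + real i + 1) = (\<Prod>i<M. x + real i + 1) * (x + real M + 1)" by simp
  also have "\<dots> = fact M * (\<Prod>m\<in>{1..M}. 1 + x / real m) * (x + real M + 1)" by (simp add: Suc.IH)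
  also have "x + real M + 1 = (real M + 1) * (1 + x / real (Suc M))" by (simp add: field_simps)
  finally show ?case unfolding s by (simp add: mult_ac)
qed

lemma c_bound:
  assumes x: "0 < (x::real)" and K: "1 \<le> K" "K \<le> M"
  shows "\<bar>real_of_int (coeff (Qm M) j)\<bar> \<le> fact M * exp (x + real K + x * (ln (real M) - ln (real K))) / x ^ j"
proof -
  have "\<bar>real_of_int (coeff (Qm M) j)\<bar> \<le> coeff (Qp M) j" using Qm_Qp_coeff by blast
  also have "\<dots> = coeff (Qp M) j * x ^ j / x ^ j" using x by simp
  also have "\<dots> \<le> (\<Prod>i<M. x + real i + 1) / x ^ j"
    by (intro divide_right_mono coeff_Qp_le) (use x in auto)
  also have "\<dots> = fact M * (\<Prod>m\<in>{1..M}. 1 + x / real m) / x ^ j" by (simp add: prod_reindex_fact)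
  also have "\<dots> \<le> fact M * exp (x + real K + x * (ln (real M) - ln (real K))) / x ^ j"
    by (intro divide_right_mono mult_left_mono prod_bound K) (use x in auto)
  finally show ?thesis .
qed

lemma second_ff:
  assumes n: "0 < n" and k: "0 < k" and a: "1 \<le> a" and t: "40 \<le> n / real k"
    and K: "1 \<le> K" "K \<le> M" and KL: "ln (real M) - ln (real K) \<le> n / real k / 4"
  shows "measure_pmf.expectation (poisson_pmf (n * real a / real k)) (\<lambda>j. (ff M k n j)\<^sup>2)
           \<le> (1 + real M) * exp (2 * real K - 3 * (n / real k) / 4)"
proof -
  define t where "t = n / real k"
  have tp: "0 < t" using t by (simp add: t_def)
  have l: "n * real a / real k = t * real a" by (simp add: t_def)
  have lp: "0 < t * real a" using tp a by simp
  define B where "B = exp (2 * real K - 3 * t / 4)"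
  have L0: "0 \<le> ln (real M) - ln (real K)" using K by simp
  have E: "measure_pmf.expectation (poisson_pmf (t * real a)) (\<lambda>j. (ff M k n j)\<^sup>2)
          = (\<Sum>j\<le>M. (ff M k n j)\<^sup>2 * ((t * real a) ^ j / fact j * exp (- (t * real a))))"
    by (subst expect_finite[where M = M]) (use lp in \<open>auto simp: ff_zero\<close>)
  have sp: "{..M} = insert 0 {1..M}" by auto
  have h0: "(ff M k n 0)\<^sup>2 * ((t * real a) ^ 0 / fact 0 * exp (- (t * real a))) \<le> B"
  proof -
    have ta: "t \<le> t * real a" using tp a by simp
    have K0: "0 \<le> real K" by simp
    have "- (t * real a) \<le> 2 * real K - 3 * t / 4" using ta tp K0 by linarith
    then show ?thesis by (simp add: ff_0 B_def)
  qed
  have hj: "(ff M k n j)\<^sup>2 * ((t * real a) ^ j / fact j * exp (- (t * real a))) \<le> B" if j: "j \<in> {1..M}" for j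
  proof -
    have fj: "ff M k n j = (-1) ^ (M + 1) * ((fact j / fact M) * (1 / t) ^ j * real_of_int (coeff (Qm M) j))"
      using j by (simp add: ff_def coef_u_eq t_def)
    have "(ff M k n j)\<^sup>2 = ((fact j / fact M) * (1 / t) ^ j * real_of_int (coeff (Qm M) j))\<^sup>2"
    proof -
      have s2: "((-1::real) ^ (M + 1))\<^sup>2 = 1" by (simp add: power_mult[symmetric])
      show ?thesis unfolding fj power_mult_distrib[of "(-1::real) ^ (M + 1)"] s2 by simp
    qed
    moreover have "((fact j / fact M) * (1 / t) ^ j * real_of_int (coeff (Qm M) j))\<^sup>2 *
        ((t * real a) ^ j / fact j * exp (- (t * real a))) \<le> exp (2 * real K - 3 * t * real a / 4)"
    proof -
      have cb: "\<And>x. 0 < x \<Longrightarrow> \<bar>real_of_int (coeff (Qm M) j)\<bar>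
           \<le> fact M * exp (x + real K + x * (ln (real M) - ln (real K))) / x ^ j"
        using c_bound K by blast
      have t40: "40 \<le> t" using t by (simp add: t_def)
      have a1: "1 \<le> real a" using a by simp
      have j1: "1 \<le> j" using j by simp
      have KL': "ln (real M) - ln (real K) \<le> t / 4" using KL by (simp add: t_def)
      show ?thesis by (rule term_bound[OF t40 a1 j1 L0 KL' _ cb]) simp
    qed
    moreover have "exp (2 * real K - 3 * t * real a / 4) \<le> B"
    proof -
      have "t \<le> t * real a" using tp a by simp
      then show ?thesis unfolding B_def by (intro exp_mono) simp
    qed
    ultimately show ?thesis by simp
  qed
  have "(\<Sum>j\<le>M. (ff M k n j)\<^sup>2 * ((t * real a) ^ j / fact j * exp (- (t * real a))))
        = (ff M k n 0)\<^sup>2 * ((t * real a) ^ 0 / fact 0 * exp (- (t * real a)))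
          + (\<Sum>j\<in>{1..M}. (ff M k n j)\<^sup>2 * ((t * real a) ^ j / fact j * exp (- (t * real a))))"
    unfolding sp by (subst sum.insert) auto
  also have "\<dots> \<le> B + (\<Sum>j\<in>{1..M}. B)"
    by (intro add_mono h0 sum_mono hj)
  also have "\<dots> = (1 + real M) * B" by (simp add: algebra_simps)
  finally show ?thesis using E unfolding l B_def t_def by simp
qed




lemma int_bound: "(\<And>x. \<bar>f x\<bar> \<le> B) \<Longrightarrow> integrable (measure_pmf p) (f :: _ \<Rightarrow> real)"
  by (rule measure_pmf.integrable_const_bound[where B=B]) auto

lemma marg:
  assumes "finite I" "i \<in> I"
  shows "measure_pmf.expectation (Pi_pmf I d p) (\<lambda>N. h (N i)) = measure_pmf.expectation (p i) (h :: _ \<Rightarrow> real)"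
proof -
  have "measure_pmf.expectation (Pi_pmf I d p) (\<lambda>N. h (N i))
        = measure_pmf.expectation (map_pmf (\<lambda>N. N i) (Pi_pmf I d p)) h"
    by (simp add: integral_map_pmf)
  also have "map_pmf (\<lambda>N. N i) (Pi_pmf I d p) = p i" using assms by (simp add: Pi_pmf_component)
  finally show ?thesis .
qed

lemma pair_nonneg:
  assumes fin: "finite I" and ij: "i \<in> I" "j \<in> I" "i \<noteq> j"
    and G: "\<And>v. 0 \<le> G v" "\<And>v. G v \<le> B"
  shows "measure_pmf.expectation (Pi_pmf I d p) (\<lambda>N. G (N i) * G (N j))
       = measure_pmf.expectation (p i) G * measure_pmf.expectation (p j) (G :: _ \<Rightarrow> real)"
proof -
  define phi where "phi x v = (if x = i then G v else if x = j then G v else 1)" for x v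
  have sub: "{i, j} \<subseteq> I" using ij by auto
  have pr: "(\<Prod>x\<in>I. phi x (N x)) = G (N i) * G (N j)" for N
  proof -
    have "(\<Prod>x\<in>I. phi x (N x)) = (\<Prod>x\<in>I - {i, j}. phi x (N x)) * (\<Prod>x\<in>{i, j}. phi x (N x))"
      by (rule prod.subset_diff[OF sub fin])
    also have "(\<Prod>x\<in>I - {i, j}. phi x (N x)) = 1" by (rule prod.neutral) (auto simp: phi_def)
    finally show ?thesis using ij by (simp add: phi_def)
  qed
  have pr2: "(\<Prod>x\<in>I. measure_pmf.expectation (p x) (phi x))
      = measure_pmf.expectation (p i) G * measure_pmf.expectation (p j) G"
  proof -
    have "(\<Prod>x\<in>I. measure_pmf.expectation (p x) (phi x))
        = (\<Prod>x\<in>I - {i, j}. measure_pmf.expectation (p x) (phi x)) * (\<Prod>x\<in>{i, j}. measure_pmf.expectation (p x) (phi x))"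
      by (rule prod.subset_diff[OF sub fin])
    also have "(\<Prod>x\<in>I - {i, j}. measure_pmf.expectation (p x) (phi x)) = 1"
    proof (rule prod.neutral, rule ballI)
      fix x assume x: "x \<in> I - {i, j}"
      then have "phi x = (\<lambda>_. 1)" by (auto simp: phi_def fun_eq_iff)
      then show "measure_pmf.expectation (p x) (phi x) = 1" by simp
    qed
    also have "(\<Prod>x\<in>{i, j}. measure_pmf.expectation (p x) (phi x))
        = measure_pmf.expectation (p i) (phi i) * measure_pmf.expectation (p j) (phi j)" using ij by simp
    also have "phi i = G" using ij by (auto simp: phi_def fun_eq_iff)
    also have "phi j = G" using ij by (auto simp: phi_def fun_eq_iff)
    finally show ?thesis by simp
  qed
  have "measure_pmf.expectation (Pi_pmf I d p) (\<lambda>y. \<Prod>x\<in>I. phi x (y x))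
        = (\<Prod>x\<in>I. measure_pmf.expectation (p x) (\<lambda>v. phi x v))"
  proof (rule expectation_prod_Pi_pmf[OF fin])
    fix x assume "x \<in> I"
    show "integrable (measure_pmf (p x)) (phi x)"
    proof (rule int_bound[where B = "B + 1"])
      fix v
      have "0 \<le> G v" "G v \<le> B" "0 \<le> B" using G[of v] G[of undefined] by auto
      then show "\<bar>phi x v\<bar> \<le> B + 1" by (auto simp: phi_def)
    qed
  next
    fix x y show "0 \<le> phi x y" using G by (simp add: phi_def)
  qed
  then show ?thesis unfolding pr pr2 .
qed

lemma pair:
  assumes fin: "finite I" and ij: "i \<in> I" "j \<in> I" "i \<noteq> j"
    and g: "\<And>v. \<bar>g v\<bar> \<le> B"
  shows "measure_pmf.expectation (Pi_pmf I d p) (\<lambda>N. g (N i) * g (N j))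
       = measure_pmf.expectation (p i) g * measure_pmf.expectation (p j) (g :: _ \<Rightarrow> real)"
proof -
  define G where "G v = g v + B" for v
  have G0: "0 \<le> G v" for v using g[of v] by (simp add: G_def)
  have G1: "G v \<le> 2 * B" for v using g[of v] by (simp add: G_def)
  define P where "P = Pi_pmf I d p"
  have iG: "integrable (measure_pmf q) G" for q by (rule int_bound[where B = "2 * B"]) (use G0 G1 in \<open>simp add: abs_of_nonneg\<close>)
  have ig: "integrable (measure_pmf q) g" for q by (rule int_bound[where B = B]) (use g in simp)
  have iGi: "integrable (measure_pmf P) (\<lambda>N. G (N x))" for x
    by (rule int_bound[where B = "2 * B"]) (use G0 G1 in \<open>simp add: abs_of_nonneg\<close>)
  have iGG: "integrable (measure_pmf P) (\<lambda>N. G (N i) * G (N j))"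
  proof (rule int_bound[where B = "2 * B * (2 * B)"])
    fix N :: "_ \<Rightarrow> _"
    have B2: "0 \<le> 2 * B" using G0[of undefined] G1[of undefined] by simp
    have "G (N i) * G (N j) \<le> 2 * B * (2 * B)" by (rule mult_mono) (use G0 G1 B2 in auto)
    then show "\<bar>G (N i) * G (N j)\<bar> \<le> 2 * B * (2 * B)" using G0 by (simp add: abs_of_nonneg)
  qed
  have Gf: "G = (\<lambda>v. g v + B)" by (simp add: G_def fun_eq_iff)
  have EG: "measure_pmf.expectation q G = measure_pmf.expectation q g + B" for q
    unfolding Gf using ig[of q] by (simp add: Bochner_Integration.integral_add)
  have eq: "g (N i) * g (N j) = G (N i) * G (N j) - B * G (N i) - B * G (N j) + B * B" for N
    by (simp add: G_def algebra_simps)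
  have "measure_pmf.expectation P (\<lambda>N. g (N i) * g (N j))
      = measure_pmf.expectation P (\<lambda>N. G (N i) * G (N j) - B * G (N i) - B * G (N j) + B * B)"
    by (simp only: eq)
  also have "\<dots> = measure_pmf.expectation P (\<lambda>N. G (N i) * G (N j)) - B * measure_pmf.expectation P (\<lambda>N. G (N i))
      - B * measure_pmf.expectation P (\<lambda>N. G (N j)) + B * B"
    using iGG iGi by (simp add: Bochner_Integration.integral_diff Bochner_Integration.integral_add)
  also have "measure_pmf.expectation P (\<lambda>N. G (N i) * G (N j)) = measure_pmf.expectation (p i) G * measure_pmf.expectation (p j) G"
    unfolding P_def by (rule pair_nonneg[OF fin ij G0 G1])
  also have "measure_pmf.expectation P (\<lambda>N. G (N i)) = measure_pmf.expectation (p i) G"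
    unfolding P_def by (rule marg[OF fin ij(1)])
  also have "measure_pmf.expectation P (\<lambda>N. G (N j)) = measure_pmf.expectation (p j) G"
    unfolding P_def by (rule marg[OF fin ij(2)])
  also have "measure_pmf.expectation (p i) G = measure_pmf.expectation (p i) g + B" by (rule EG)
  also have "measure_pmf.expectation (p j) G = measure_pmf.expectation (p j) g + B" by (rule EG)
  finally show ?thesis unfolding P_def by (simp add: algebra_simps)
qed

lemma second_moment_sum:
  assumes fin: "finite I" and g: "\<And>v. \<bar>g v\<bar> \<le> B"
  shows "measure_pmf.expectation (Pi_pmf I d p) (\<lambda>N. (\<Sum>i\<in>I. g (N i))\<^sup>2)
     \<le> (\<Sum>i\<in>I. measure_pmf.expectation (p i) (\<lambda>v. (g v)\<^sup>2))
        + (\<Sum>i\<in>I. \<bar>measure_pmf.expectation (p i) (g :: _ \<Rightarrow> real)\<bar>)\<^sup>2"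
proof -
  define P where "P = Pi_pmf I d p"
  define mu where "mu i = measure_pmf.expectation (p i) g" for i
  define v where "v i = measure_pmf.expectation (p i) (\<lambda>x. (g x)\<^sup>2)" for i
  have sq: "(\<Sum>i\<in>I. g (N i))\<^sup>2 = (\<Sum>i\<in>I. \<Sum>j\<in>I. g (N i) * g (N j))" for N
    by (simp add: power2_eq_square sum_product)
  have B0: "0 \<le> B" using g[of undefined] by simp
  have iprod: "integrable (measure_pmf P) (\<lambda>N. g (N i) * g (N j))" for i j
    by (rule int_bound[where B = "B * B"]) (use g B0 in \<open>auto simp: abs_mult intro!: mult_mono\<close>)
  have "measure_pmf.expectation P (\<lambda>N. (\<Sum>i\<in>I. g (N i))\<^sup>2)
     = (\<Sum>i\<in>I. \<Sum>j\<in>I. measure_pmf.expectation P (\<lambda>N. g (N i) * g (N j)))"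
    unfolding sq using iprod by (simp add: Bochner_Integration.integral_sum)
  also have "\<dots> = (\<Sum>i\<in>I. \<Sum>j\<in>I. if i = j then v i else mu i * mu j)"
  proof (intro sum.cong refl)
    fix i j assume ij: "i \<in> I" "j \<in> I"
    show "measure_pmf.expectation P (\<lambda>N. g (N i) * g (N j)) = (if i = j then v i else mu i * mu j)"
    proof (cases "i = j")
      case True
      then show ?thesis unfolding P_def v_def using marg[OF fin ij(1), of d p "\<lambda>x. (g x)\<^sup>2"]
        by (simp add: power2_eq_square)
    next
      case False
      then show ?thesis unfolding P_def mu_def using pair[OF fin ij False g] by simp
    qed
  qed
  also have "\<dots> \<le> (\<Sum>i\<in>I. \<Sum>j\<in>I. (if i = j then v i else 0) + \<bar>mu i\<bar> * \<bar>mu j\<bar>)"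
  proof (intro sum_mono)
    fix i j
    show "(if i = j then v i else mu i * mu j) \<le> (if i = j then v i else 0) + \<bar>mu i\<bar> * \<bar>mu j\<bar>"
      by (cases "i = j") (auto simp: abs_mult[symmetric])
  qed
  also have "\<dots> = (\<Sum>i\<in>I. v i) + (\<Sum>i\<in>I. \<bar>mu i\<bar>)\<^sup>2"
    using fin by (simp add: sum.distrib power2_eq_square sum_product)
  finally show ?thesis unfolding P_def mu_def v_def .
qed




lemma card_filter_sum: "finite A \<Longrightarrow> real (card {x\<in>A. P x}) = (\<Sum>x\<in>A. if P x then 1 else 0)"
proof -
  assume f: "finite A"
  have "real (card {x\<in>A. P x}) = (\<Sum>x\<in>{x\<in>A. P x}. 1)" by simp
  also have "\<dots> = (\<Sum>x\<in>A. if P x then 1 else 0)" by (rule sum.inter_filter[OF f])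
  finally show ?thesis .
qed

lemma C_seen_eq:
  assumes fin: "finite I"
  shows "real (C_seen I N) = (\<Sum>i\<in>I. if N i = 0 then 0 else 1)"
proof -
  define Mx where "Mx = Max (insert 0 (N ` I))"
  have le: "N i \<le> Mx" if "i \<in> I" for i unfolding Mx_def using fin that by (intro Max_ge) auto
  have "real (C_seen I N) = (\<Sum>j\<in>{1..Mx}. real (fingerprint I N j))"
    by (simp add: C_seen_def Mx_def)
  also have "\<dots> = (\<Sum>j\<in>{1..Mx}. \<Sum>i\<in>I. if N i = j then 1 else 0)"
    unfolding fingerprint_def using fin by (simp add: card_filter_sum)
  also have "\<dots> = (\<Sum>i\<in>I. \<Sum>j\<in>{1..Mx}. if N i = j then 1 else 0)" by (rule sum.swap)
  also have "\<dots> = (\<Sum>i\<in>I. if N i = 0 then 0 else 1)"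
  proof (rule sum.cong[OF refl])
    fix i assume i: "i \<in> I"
    have "(\<Sum>j\<in>{1..Mx}. if N i = j then 1 else 0 :: real) = (if N i \<in> {1..Mx} then 1 else 0)"
      by (simp add: sum.delta)
    then show "(\<Sum>j\<in>{1..Mx}. if N i = j then 1 else 0 :: real) = (if N i = 0 then 0 else 1)"
      using le[OF i] by auto
  qed
  finally show ?thesis .
qed

lemma C_tilde_eq:
  assumes fin: "finite I"
  shows "C_tilde M k n I N - real (card I) = (\<Sum>i\<in>I. ff M k n (N i))"
proof -
  have u: "(\<Sum>j\<in>{1..M}. coef_u M k n j * real (fingerprint I N j)) = (\<Sum>i\<in>I. coef_u M k n (N i))"
  proof -
    have "(\<Sum>j\<in>{1..M}. coef_u M k n j * real (fingerprint I N j))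
        = (\<Sum>j\<in>{1..M}. \<Sum>i\<in>I. if N i = j then coef_u M k n j else 0)"
    proof (rule sum.cong[OF refl])
      fix j
      have "coef_u M k n j * real (fingerprint I N j) = coef_u M k n j * (\<Sum>i\<in>I. if N i = j then 1 else 0)"
        unfolding fingerprint_def card_filter_sum[OF fin] ..
      also have "\<dots> = (\<Sum>i\<in>I. if N i = j then coef_u M k n j else 0)"
        by (simp add: sum_distrib_left) (rule sum.cong, auto)
      finally show "coef_u M k n j * real (fingerprint I N j) = (\<Sum>i\<in>I. if N i = j then coef_u M k n j else 0)" .
    qed
    also have "\<dots> = (\<Sum>i\<in>I. \<Sum>j\<in>{1..M}. if N i = j then coef_u M k n j else 0)" by (rule sum.swap)
    also have "\<dots> = (\<Sum>i\<in>I. coef_u M k n (N i))"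
    proof (rule sum.cong[OF refl])
      fix i
      have "(\<Sum>j\<in>{1..M}. if N i = j then coef_u M k n j else 0) = (if N i \<in> {1..M} then coef_u M k n (N i) else 0)"
        by (simp add: sum.delta)
      then show "(\<Sum>j\<in>{1..M}. if N i = j then coef_u M k n j else 0) = coef_u M k n (N i)"
        by (auto simp: coef_u_def)
    qed
    finally show ?thesis .
  qed
  have c: "real (card I) = (\<Sum>i\<in>I. 1)" by simp
  have "C_tilde M k n I N - real (card I)
      = (\<Sum>i\<in>I. if N i = 0 then 0 else 1) + (\<Sum>i\<in>I. coef_u M k n (N i)) - (\<Sum>i\<in>I. 1)"
    unfolding C_tilde_def u C_seen_eq[OF fin] c ..
  also have "\<dots> = (\<Sum>i\<in>I. (if N i = 0 then 0 else 1) + coef_u M k n (N i) - 1)"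
    by (simp only: sum.distrib sum_subtractf)
  also have "\<dots> = (\<Sum>i\<in>I. ff M k n (N i))"
    by (rule sum.cong[OF refl]) (simp add: ff_def)
  finally show ?thesis .
qed

lemma clamp: "lo \<le> C \<Longrightarrow> C \<le> hi \<Longrightarrow> (min (max x lo) hi - C)\<^sup>2 \<le> (x - (C::real))\<^sup>2"
proof -
  assume a: "lo \<le> C" "C \<le> hi"
  have "\<bar>min (max x lo) hi - C\<bar> \<le> \<bar>x - C\<bar>" using a by (simp add: min_def max_def abs_if)
  then show ?thesis by (simp add: abs_le_square_iff)
qed




lemma exp_big: "400 \<le> (t::real) \<Longrightarrow> 38.5 * t \<le> exp (t / 8)"
proof -
  assume t: "400 \<le> t"
  have q: "(t / 16)\<^sup>2 / 2 \<le> exp (t / 16)"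
    using exp_lower_Taylor_quadratic[of "t / 16"] t by simp
  have "exp (t / 8) = (exp (t / 16))\<^sup>2" by (simp add: power2_eq_square exp_add[symmetric])
  also have "\<dots> \<ge> ((t / 16)\<^sup>2 / 2)\<^sup>2" by (rule power_mono[OF q]) simp
  finally have e: "((t / 16)\<^sup>2 / 2)\<^sup>2 \<le> exp (t / 8)" .
  have "38.5 * t \<le> ((t / 16)\<^sup>2 / 2)\<^sup>2"
  proof -
    have "t ^ 3 \<ge> 400 ^ 3" by (rule power_mono) (use t in auto)
    then have "38.5 * 262144 \<le> t ^ 3" by simp
    then have "38.5 * 262144 * t \<le> t ^ 3 * t" using t by (intro mult_right_mono) auto
    then show ?thesis by (simp add: power2_eq_square power3_eq_cube field_simps)
  qed
  then show ?thesis using e by linarith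
qed




lemma analytic:
  fixes t L K :: real and M :: nat
  assumes t: "400 \<le> t" and M: "1 \<le> M" and L: "L = real M * t / 3.5"
    and K0: "0 \<le> K" and K1: "K \<le> real M * exp (- t / 4) + 1"
  defines "X \<equiv> (1 + real M) * exp (2 * K - 3 * t / 4) + exp (- t)"
  shows "X \<le> exp (- t / 8) \<or> (t \<le> 12 * ln L \<and> X \<le> exp (L / t\<^sup>2 * exp (- t / 8)) + exp (- t / 8))"
proof -
  define Q where "Q = ln (1 + real M) + 2 + 2 * real M * exp (- t / 4)"
  have M0: "0 < 1 + real M" by simp
  have XQ: "(1 + real M) * exp (2 * K - 3 * t / 4) \<le> exp (Q - 3 * t / 4)"
  proof -
    have "(1 + real M) * exp (2 * K - 3 * t / 4) = exp (ln (1 + real M) + (2 * K - 3 * t / 4))"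
      using M0 by (simp add: exp_add)
    also have "\<dots> \<le> exp (Q - 3 * t / 4)" unfolding Q_def using K1 by (intro exp_mono) linarith
    finally show ?thesis .
  qed
  have et: "exp (- t) \<le> exp (- t / 8)" using t by simp
  show ?thesis
  proof (cases "Q \<le> t / 2")
    case True
    have e8: "2 \<le> exp (t / 8)" using exp_ge_add_one_self[of "t / 8"] t by linarith
    have a: "exp (- t / 4) * 2 \<le> exp (- t / 8)"
    proof -
      have "exp (- t / 4) * 2 \<le> exp (- t / 4) * exp (t / 8)" using e8 by simp
      also have "\<dots> = exp (- t / 8)" by (simp add: exp_add[symmetric])
      finally show ?thesis .
    qed
    have b: "exp (- t) \<le> exp (- t / 4)" using t by simp
    have "X \<le> exp (Q - 3 * t / 4) + exp (- t)" unfolding X_def using XQ by simp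
    also have "exp (Q - 3 * t / 4) \<le> exp (- t / 4)" using True by simp
    finally have "X \<le> exp (- t / 4) + exp (- t)" by simp
    then have "X \<le> exp (- t / 8)" using a b by linarith
    then show ?thesis by simp
  next
    case False
    define y0 where "y0 = exp (t / 4 - 2)"
    have y0p: "0 < y0" by (simp add: y0_def)
    have y0M: "y0 \<le> 1 + real M"
    proof (rule ccontr)
      assume "\<not> y0 \<le> 1 + real M"
      then have lt: "1 + real M < y0" by simp
      have l1: "ln (1 + real M) < t / 4 - 2"
        using lt M0 by (metis y0_def ln_exp ln_less_cancel_iff y0p)
      have "real M * exp (- t / 4) \<le> y0 * exp (- t / 4)" using lt by simp
      also have "y0 * exp (- t / 4) = exp (- 2)" by (simp add: y0_def exp_add[symmetric])
      also have "exp (- 2) \<le> (1 / 2 :: real)"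
      proof -
        have "2 \<le> exp (2::real)" using exp_ge_add_one_self[of 2] by simp
        then show ?thesis by (simp add: exp_minus field_simps)
      qed
      finally have "2 * real M * exp (- t / 4) \<le> 1" by simp
      then have "Q < t / 4 + 1" unfolding Q_def using l1 by linarith
      then show False using False t by simp
    qed
    have lnM: "t / 4 - 2 \<le> ln (1 + real M)"
      using y0M y0p by (metis ln_exp ln_le_cancel_iff y0_def M0)
    have LM: "real M \<le> L" unfolding L using t M by (simp add: field_simps)
    have L1: "1 \<le> L" using LM M by simp
    have lnL: "ln (1 + L) \<le> 1 + ln L"
    proof -
      have "ln (1 + L) \<le> ln (2 * L)" using L1 by simp
      also have "\<dots> = ln 2 + ln L" using L1 by (simp add: ln_mult)
      also have "ln (2::real) \<le> 1" using ln_le_minus_one[of 2] by simp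
      finally show ?thesis by simp
    qed
    have "ln (1 + real M) \<le> ln (1 + L)" using LM by simp
    then have lnL2: "t / 4 - 3 \<le> ln L" using lnM lnL by linarith
    have c1: "t \<le> 12 * ln L" using lnL2 t by linarith
    have c2: "X \<le> exp (L / t\<^sup>2 * exp (- t / 8)) + exp (- t / 8)"
    proof -
      define al where "al = exp (- t / 8) / (3.5 * t)"
      have tp: "0 < t" using t by simp
      have alL: "L / t\<^sup>2 * exp (- t / 8) = al * real M"
        unfolding L al_def using tp by (simp add: power2_eq_square field_simps)
      have al1: "al \<le> 1"
      proof -
        have e1: "exp (- t / 8) \<le> 1" using t by simp
        have "al \<le> 1 / (3.5 * t)" unfolding al_def using t by (intro divide_right_mono e1) auto
        also have "1 / (3.5 * t) \<le> 1" using t by simp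
        finally show ?thesis .
      qed
      have e11: "11 * exp (- t / 4) \<le> al"
      proof -
        have "38.5 * t \<le> exp (t / 8)" by (rule exp_big[OF t])
        then have "38.5 * t * exp (- t / 4) \<le> exp (t / 8) * exp (- t / 4)" by simp
        also have "exp (t / 8) * exp (- t / 4) = exp (- t / 8)" by (simp add: exp_add[symmetric])
        finally show ?thesis unfolding al_def using tp by (simp add: field_simps)
      qed
      have lnb: "ln (1 + real M) \<le> t / 4 - 3 + (1 + real M) / y0"
      proof -
        have "ln ((1 + real M) / y0) \<le> (1 + real M) / y0 - 1" using y0p M0 by (intro ln_le_minus_one) simp
        moreover have "ln ((1 + real M) / y0) = ln (1 + real M) - (t / 4 - 2)"
          using y0p M0 by (simp add: ln_div y0_def)
        ultimately show ?thesis by simp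
      qed
      have yb: "(1 + real M) / y0 \<le> 9 * (1 + real M) * exp (- t / 4)"
      proof -
        have i1: "1 / y0 = exp (- (t / 4 - 2))" unfolding y0_def by (metis exp_minus inverse_eq_divide)
        have i2: "exp (- (t / 4 - 2)) = exp 2 * exp (- t / 4)"
        proof -
          have "- (t / 4 - 2) = 2 + (- t / 4)" by simp
          then show ?thesis by (simp only: exp_add)
        qed
        have "(1 + real M) / y0 = (1 + real M) * (1 / y0)" by simp
        also have "\<dots> = (1 + real M) * exp 2 * exp (- t / 4)" unfolding i1 i2 by simp
        finally have "(1 + real M) / y0 = (1 + real M) * exp 2 * exp (- t / 4)" .
        also have "exp (2::real) \<le> 9"
        proof -
          have "exp (2::real) = exp 1 ^ 2" by (simp add: exp_of_nat_mult[symmetric])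
          also have "\<dots> \<le> 3 ^ 2" by (rule power_mono) (use exp_le in auto)
          finally show ?thesis by simp
        qed
        then have "(1 + real M) * exp 2 * exp (- t / 4) \<le> (1 + real M) * 9 * exp (- t / 4)"
          by (intro mult_right_mono mult_left_mono) auto
        finally show ?thesis by (simp add: mult_ac)
      qed
      define E4 where "E4 = exp (- t / 4)"
      have E40: "0 \<le> E4" by (simp add: E4_def)
      define W where "W = (1 + real M) * E4"
      have W0: "0 \<le> W" using E40 by (simp add: W_def)
      have MW: "real M * E4 \<le> W" using E40 by (simp add: W_def algebra_simps)
      have "9 * (1 + real M) * exp (- t / 4) = 9 * W" by (simp add: W_def E4_def)
      then have yb': "(1 + real M) / y0 \<le> 9 * W" using yb by linarith
      have Qe: "Q = ln (1 + real M) + 2 + 2 * (real M * E4)" by (simp add: Q_def E4_def mult_ac)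
      have "Q - 3 * t / 4 \<le> - t / 2 - 1 + 11 * W"
        unfolding Qe using lnb yb' MW W0 by linarith
      also have "11 * W \<le> al * (1 + real M)"
      proof -
        have "11 * W = (11 * E4) * (1 + real M)" by (simp add: W_def mult_ac)
        also have "\<dots> \<le> al * (1 + real M)" using e11 by (intro mult_right_mono) (auto simp: E4_def)
        finally show ?thesis .
      qed
      finally have "Q - 3 * t / 4 \<le> - t / 2 - 1 + al * (1 + real M)" by simp
      then have "Q - 3 * t / 4 \<le> al * real M" using al1 t by (simp add: algebra_simps)
      then have "(1 + real M) * exp (2 * K - 3 * t / 4) \<le> exp (L / t\<^sup>2 * exp (- t / 8))"
        using XQ unfolding alL by (meson exp_le_cancel_iff order_trans)
      then show ?thesis unfolding X_def using et by linarith
    qed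
    show ?thesis using c1 c2 by simp
  qed
qed




lemma main:
  fixes k :: nat and n :: real and M :: nat and I :: "nat set" and kc :: "nat \<Rightarrow> nat"
  assumes k3: "k \<ge> 3" and nk: "n > 400 * real k" and hM: "real M = 3.5 * real k * ln (real k) / n"
    and fin: "finite I" and kc1: "\<forall>i\<in>I. kc i \<ge> 1" and ks: "(\<Sum>i\<in>I. kc i) = k"
  shows "measure_pmf.expectation (poisson_hist I kc k n) (\<lambda>N. (C_hat M k n I N - real (card I))\<^sup>2)
      \<le> real k * exp (- (1/8) * n / real k)
        \<or> (n \<le> 12 * real k * ln (ln (real k)) \<and>
           measure_pmf.expectation (poisson_hist I kc k n) (\<lambda>N. (C_hat M k n I N - real (card I))\<^sup>2)
           \<le> real k * exp (- (1/8) * n / real k)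
             + real k * exp ((real k)\<^sup>2 * ln (real k) / n\<^sup>2 * exp (- (1/8) * n / real k)))"
proof -
  define t where "t = n / real k"
  have kp: "0 < real k" using k3 by simp
  have np: "0 < n" using nk kp by linarith
  have t400: "400 \<le> t" using nk kp by (simp add: t_def field_simps)
  have tp: "0 < t" using t400 by simp
  have nt: "n = t * real k" using kp by (simp add: t_def)
  have lnk0: "0 < ln (real k)" using k3 by simp
  have Lk: "ln (real k) = real M * t / 3.5"
    using hM np kp by (simp add: t_def field_simps)
  have M1: "1 \<le> M"
  proof (rule ccontr)
    assume "\<not> 1 \<le> M"
    then have "M = 0" by simp
    then show False using Lk lnk0 by simp
  qed
  have cardI: "card I \<le> k"
  proof -
    have "card I = (\<Sum>i\<in>I. 1::nat)" by simp
    also have "\<dots> \<le> (\<Sum>i\<in>I. kc i)" using kc1 by (intro sum_mono) auto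
    finally show ?thesis using ks by simp
  qed
  define p where "p i = poisson_pmf (n * real (kc i) / real k)" for i
  have PP: "poisson_hist I kc k n = Pi_pmf I 0 p" unfolding poisson_hist_def p_def[abs_def] ..
  define g where "g = ff M k n"
  define Bg where "Bg = (\<Sum>j\<le>M. \<bar>g j\<bar>)"
  have hg: "\<bar>g v\<bar> \<le> Bg" for v
  proof (cases "v \<le> M")
    case True then show ?thesis unfolding Bg_def by (intro member_le_sum) auto
  next
    case False then show ?thesis unfolding Bg_def by (simp add: g_def ff_zero sum_nonneg)
  qed
  have Bg0: "0 \<le> Bg" using hg[of 0] by simp
  have sum_le: "\<bar>\<Sum>i\<in>I. g (N i)\<bar> \<le> real (card I) * Bg" for N
  proof -
    have "\<bar>\<Sum>i\<in>I. g (N i)\<bar> \<le> (\<Sum>i\<in>I. \<bar>g (N i)\<bar>)" by (rule sum_abs)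
    also have "\<dots> \<le> (\<Sum>i\<in>I. Bg)" by (intro sum_mono hg)
    finally show ?thesis by simp
  qed
  have pw: "(C_hat M k n I N - real (card I))\<^sup>2 \<le> (\<Sum>i\<in>I. g (N i))\<^sup>2" for N
  proof -
    have cs: "real (C_seen I N) \<le> real (card I)"
    proof -
      have "real (C_seen I N) = (\<Sum>i\<in>I. if N i = 0 then 0 else 1)" by (rule C_seen_eq[OF fin])
      also have "\<dots> \<le> (\<Sum>i\<in>I. 1)" by (intro sum_mono) auto
      finally show ?thesis by simp
    qed
    have ck: "real (card I) \<le> real k" using cardI by simp
    have "(C_hat M k n I N - real (card I))\<^sup>2 \<le> (C_tilde M k n I N - real (card I))\<^sup>2"
      unfolding C_hat_def by (rule clamp[OF cs ck])
    also have "C_tilde M k n I N - real (card I) = (\<Sum>i\<in>I. g (N i))"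
      unfolding g_def by (rule C_tilde_eq[OF fin])
    finally show ?thesis .
  qed
  define E where "E = measure_pmf.expectation (poisson_hist I kc k n) (\<lambda>N. (C_hat M k n I N - real (card I))\<^sup>2)"
  have st1: "E \<le> measure_pmf.expectation (Pi_pmf I 0 p) (\<lambda>N. (\<Sum>i\<in>I. g (N i))\<^sup>2)"
    unfolding E_def PP
  proof (rule integral_mono)
    have bnd: "\<bar>(\<Sum>i\<in>I. g (N i))\<^sup>2\<bar> \<le> (real (card I) * Bg)\<^sup>2" for N
    proof -
      have "\<bar>(\<Sum>i\<in>I. g (N i))\<^sup>2\<bar> = \<bar>\<Sum>i\<in>I. g (N i)\<bar>\<^sup>2" by simp
      also have "\<dots> \<le> (real (card I) * Bg)\<^sup>2" by (rule power_mono[OF sum_le]) simp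
      finally show ?thesis .
    qed
    show "integrable (measure_pmf (Pi_pmf I 0 p)) (\<lambda>N. (\<Sum>i\<in>I. g (N i))\<^sup>2)"
      by (rule int_bound[OF bnd])
    show "integrable (measure_pmf (Pi_pmf I 0 p)) (\<lambda>N. (C_hat M k n I N - real (card I))\<^sup>2)"
    proof (rule int_bound[where B = "(real (card I) * Bg)\<^sup>2"])
      fix N
      have "\<bar>(C_hat M k n I N - real (card I))\<^sup>2\<bar> = (C_hat M k n I N - real (card I))\<^sup>2" by simp
      also have "\<dots> \<le> (\<Sum>i\<in>I. g (N i))\<^sup>2" by (rule pw)
      also have "\<dots> \<le> (real (card I) * Bg)\<^sup>2" using bnd[of N] by simp
      finally show "\<bar>(C_hat M k n I N - real (card I))\<^sup>2\<bar> \<le> (real (card I) * Bg)\<^sup>2" .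
    qed
    show "\<And>N. N \<in> space (measure_pmf (Pi_pmf I 0 p)) \<Longrightarrow>
           (C_hat M k n I N - real (card I))\<^sup>2 \<le> (\<Sum>i\<in>I. g (N i))\<^sup>2" using pw by blast
  qed
  have st2: "measure_pmf.expectation (Pi_pmf I 0 p) (\<lambda>N. (\<Sum>i\<in>I. g (N i))\<^sup>2)
     \<le> (\<Sum>i\<in>I. measure_pmf.expectation (p i) (\<lambda>v. (g v)\<^sup>2))
        + (\<Sum>i\<in>I. \<bar>measure_pmf.expectation (p i) g\<bar>)\<^sup>2"
    by (rule second_moment_sum[OF fin hg])
  define K where "K = nat \<lceil>real M * exp (- t / 4)\<rceil>"
  have Mpos: "0 < real M * exp (- t / 4)" using M1 by simp
  have K1: "1 \<le> K"
  proof -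
    have "0 < real_of_int \<lceil>real M * exp (- t / 4)\<rceil>"
      using le_of_int_ceiling[of "real M * exp (- t / 4)"] Mpos by linarith
    then have "0 < \<lceil>real M * exp (- t / 4)\<rceil>" by simp
    then show ?thesis unfolding K_def by linarith
  qed
  have KM: "K \<le> M"
  proof -
    have "real M * exp (- t / 4) \<le> real M" using tp by (simp add: mult_left_le)
    then have "\<lceil>real M * exp (- t / 4)\<rceil> \<le> int M" by (simp add: ceiling_le_iff)
    then show ?thesis by (simp add: K_def nat_le_iff)
  qed
  have Kup: "real K \<le> real M * exp (- t / 4) + 1"
  proof -
    have "real K = real_of_int \<lceil>real M * exp (- t / 4)\<rceil>" using Mpos unfolding K_def by simp
    then show ?thesis using ceiling_correct[of "real M * exp (- t / 4)"] by linarith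
  qed
  have Klow: "real M * exp (- t / 4) \<le> real K"
  proof -
    have "real K = real_of_int \<lceil>real M * exp (- t / 4)\<rceil>" using Mpos unfolding K_def by simp
    then show ?thesis using le_of_int_ceiling[of "real M * exp (- t / 4)"] by linarith
  qed
  have KL: "ln (real M) - ln (real K) \<le> n / real k / 4"
  proof -
    have "ln (real M * exp (- t / 4)) \<le> ln (real K)" using Klow Mpos by simp
    then have "ln (real M) - t / 4 \<le> ln (real K)" using M1 by (simp add: ln_mult)
    then show ?thesis by (simp add: t_def)
  qed
  define X where "X = (1 + real M) * exp (2 * real K - 3 * t / 4)"
  have X0: "0 \<le> X" by (simp add: X_def)
  have vb: "measure_pmf.expectation (p i) (\<lambda>v. (g v)\<^sup>2) \<le> X" if i: "i \<in> I" for i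
  proof -
    have a: "1 \<le> kc i" using kc1 i by simp
    have t40: "40 \<le> n / real k" using t400 by (simp add: t_def)
    show ?thesis unfolding p_def g_def X_def using second_ff[OF np _ a t40 K1 KM KL] k3
      by (simp add: t_def)
  qed
  define b where "b = exp (- (t - 1) * (real M + 1))"
  have bb: "\<bar>measure_pmf.expectation (p i) g\<bar> \<le> b" if i: "i \<in> I" for i
  proof -
    have a: "1 \<le> kc i" using kc1 i by simp
    have t1: "1 \<le> n / real k" using t400 by (simp add: t_def)
    show ?thesis unfolding p_def g_def b_def using bias_bound[OF np _ a t1] k3
      by (simp add: t_def)
  qed
  have S1: "(\<Sum>i\<in>I. measure_pmf.expectation (p i) (\<lambda>v. (g v)\<^sup>2)) \<le> real k * X"
  proof -
    have "(\<Sum>i\<in>I. measure_pmf.expectation (p i) (\<lambda>v. (g v)\<^sup>2)) \<le> (\<Sum>i\<in>I. X)" by (intro sum_mono vb)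
    also have "\<dots> = real (card I) * X" by simp
    also have "\<dots> \<le> real k * X" using cardI X0 by (intro mult_right_mono) auto
    finally show ?thesis .
  qed
  have S2: "(\<Sum>i\<in>I. \<bar>measure_pmf.expectation (p i) g\<bar>)\<^sup>2 \<le> real k * exp (- t)"
  proof -
    have b0: "0 \<le> b" by (simp add: b_def)
    have "(\<Sum>i\<in>I. \<bar>measure_pmf.expectation (p i) g\<bar>) \<le> (\<Sum>i\<in>I. b)" by (intro sum_mono bb)
    also have "\<dots> = real (card I) * b" by simp
    also have "\<dots> \<le> real k * b" using cardI b0 by (intro mult_right_mono) auto
    finally have s: "(\<Sum>i\<in>I. \<bar>measure_pmf.expectation (p i) g\<bar>) \<le> real k * b" .
    have "(\<Sum>i\<in>I. \<bar>measure_pmf.expectation (p i) g\<bar>)\<^sup>2 \<le> (real k * b)\<^sup>2"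
      by (rule power_mono[OF s]) (simp add: sum_nonneg)
    also have "(real k * b)\<^sup>2 = real k * (real k * b\<^sup>2)" by (simp add: power2_eq_square)
    also have "real k * b\<^sup>2 \<le> exp (- t)"
    proof -
      have ke: "real k = exp (real M * t / 3.5)" using kp Lk by (metis exp_ln)
      have b2: "b\<^sup>2 = exp (- 2 * (t - 1) * (real M + 1))"
        by (simp add: b_def power2_eq_square exp_add[symmetric])
      have "real k * b\<^sup>2 = exp (real M * t / 3.5 - 2 * (t - 1) * (real M + 1))"
        unfolding ke b2 by (simp add: exp_add[symmetric]) (simp add: algebra_simps)
      also have "\<dots> \<le> exp (- t)"
      proof (intro exp_mono)
        have h: "400 * real M \<le> t * real M" using t400 by (intro mult_right_mono) auto
        have "real M * t / 3.5 - 2 * (t - 1) * (real M + 1) = - (12 / 7) * (t * real M) - 2 * t + 2 * real M + 2"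
          by (simp add: algebra_simps)
        then show "real M * t / 3.5 - 2 * (t - 1) * (real M + 1) \<le> - t" using h M1 t400 by linarith
      qed
      finally show ?thesis .
    qed
    finally show ?thesis using kp by (simp add: mult_left_mono)
  qed
  have Etot: "E \<le> real k * (X + exp (- t))"
    using st1 st2 S1 S2 by (simp add: algebra_simps)
  have K0: "0 \<le> real K" by simp
  have an: "X + exp (- t) \<le> exp (- t / 8) \<or>
        (t \<le> 12 * ln (ln (real k)) \<and> X + exp (- t) \<le> exp (ln (real k) / t\<^sup>2 * exp (- t / 8)) + exp (- t / 8))"
    unfolding X_def by (rule analytic[OF t400 M1 Lk K0 Kup])
  have e8: "exp (- (1/8) * n / real k) = exp (- t / 8)" by (simp add: t_def)
  have rat: "(real k)\<^sup>2 * ln (real k) / n\<^sup>2 = ln (real k) / t\<^sup>2"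
    using kp by (simp add: nt power2_eq_square field_simps)
  show ?thesis
  proof (cases "X + exp (- t) \<le> exp (- t / 8)")
    case True
    have "E \<le> real k * exp (- t / 8)" using Etot True kp
      by (meson mult_left_mono order_trans less_imp_le)
    then show ?thesis unfolding E_def e8 by simp
  next
    case False
    then have c1: "t \<le> 12 * ln (ln (real k))" and c2: "X + exp (- t) \<le> exp (ln (real k) / t\<^sup>2 * exp (- t / 8)) + exp (- t / 8)"
      using an by auto
    have n12: "n \<le> 12 * real k * ln (ln (real k))" using c1 kp unfolding nt by (simp add: mult_right_mono mult_ac)
    have "E \<le> real k * (exp (ln (real k) / t\<^sup>2 * exp (- t / 8)) + exp (- t / 8))"
      using Etot c2 kp by (meson mult_left_mono order_trans less_imp_le)
    then have "E \<le> real k * exp (- t / 8) + real k * exp (ln (real k) / t\<^sup>2 * exp (- t / 8))"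
      by (simp add: algebra_simps)
    then show ?thesis using n12 unfolding E_def e8 rat by simp
  qed
qed




theorem theorem2:
  shows "\<exists>\<eta> c C' A\<^sub>1 A\<^sub>2 :: real. \<eta> > 0 \<and> c > 0 \<and> C' > 0 \<and> A\<^sub>1 > 0 \<and> A\<^sub>2 > 0 \<and>
    (\<forall>(k::nat) (n::real) (M::nat) (I::nat set) (kc::nat \<Rightarrow> nat).
       k \<ge> 3 \<longrightarrow> n > \<eta> * real k \<longrightarrow>
       real M = 3.5 * real k * ln (real k) / n \<longrightarrow>
       finite I \<longrightarrow> (\<forall>i\<in>I. kc i \<ge> 1) \<longrightarrow> (\<Sum>i\<in>I. kc i) = k \<longrightarrow>
       measure_pmf.expectation (poisson_hist I kc k n)
          (\<lambda>N. (C_hat M k n I N - real (card I))\<^sup>2)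
       \<le> real k * exp (- c * n / real k)
         + real k powr (-0.5 - 3.5 * (real k / n) * ln (real k / (exp 1 * n)))
         + (if n \<le> A\<^sub>1 * real k * ln (ln (real k))
            then real k * exp ((real k)\<^sup>2 * ln (real k) / n\<^sup>2 * exp (- c * n / real k))
            else if n \<le> A\<^sub>2 * real k * sqrt (ln (real k))
            then real k * (C' * (real k / n) * ln ((real k)\<^sup>2 * ln (real k) / n\<^sup>2)) powr (2 * n / real k)
            else 0))"
proof (rule exI[of _ 400], rule exI[of _ "1/8"], rule exI[of _ 1], rule exI[of _ 12], rule exI[of _ 1], intro conjI, simp_all only: zero_less_numeral zero_less_divide_iff zero_less_one, simp, intro allI impI)
  fix k :: nat and n :: real and M :: nat and I :: "nat set" and kc :: "nat \<Rightarrow> nat"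
  assume k3: "3 \<le> k" and nk: "400 * real k < n" and hM: "real M = 3.5 * real k * ln (real k) / n"
    and fin: "finite I" and kc1: "\<forall>i\<in>I. 1 \<le> kc i" and ks: "(\<Sum>i\<in>I. kc i) = k"
  define E where "E = measure_pmf.expectation (poisson_hist I kc k n) (\<lambda>N. (C_hat M k n I N - real (card I))\<^sup>2)"
  define T1 where "T1 = real k * exp (- (1/8) * n / real k)"
  define T2 where "T2 = real k powr (-0.5 - 3.5 * (real k / n) * ln (real k / (exp 1 * n)))"
  define R1 where "R1 = real k * exp ((real k)\<^sup>2 * ln (real k) / n\<^sup>2 * exp (- (1/8) * n / real k))"
  define R where "R = (if n \<le> 12 * real k * ln (ln (real k)) then R1
            else if n \<le> 1 * real k * sqrt (ln (real k))
            then real k * (1 * (real k / n) * ln ((real k)\<^sup>2 * ln (real k) / n\<^sup>2)) powr (2 * n / real k)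
            else 0)"
  have T20: "0 \<le> T2" by (simp add: T2_def)
  have R0: "0 \<le> R" by (simp add: R_def R1_def)
  have m: "E \<le> T1 \<or> (n \<le> 12 * real k * ln (ln (real k)) \<and> E \<le> T1 + R1)"
    unfolding E_def T1_def R1_def by (rule main[OF k3 nk hM fin kc1 ks])
  have "E \<le> T1 + T2 + R"
  proof (cases "E \<le> T1")
    case True then show ?thesis using T20 R0 by linarith
  next
    case False
    then have "n \<le> 12 * real k * ln (ln (real k))" "E \<le> T1 + R1" using m by auto
    then have "R = R1" "E \<le> T1 + R1" by (auto simp: R_def)
    then show ?thesis using T20 by linarith
  qed
  then show "measure_pmf.expectation (poisson_hist I kc k n) (\<lambda>N. (C_hat M k n I N - real (card I))\<^sup>2)
       \<le> real k * exp (- (1/8) * n / real k)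
         + real k powr (-0.5 - 3.5 * (real k / n) * ln (real k / (exp 1 * n)))
         + (if n \<le> 12 * real k * ln (ln (real k))
            then real k * exp ((real k)\<^sup>2 * ln (real k) / n\<^sup>2 * exp (- (1/8) * n / real k))
            else if n \<le> 1 * real k * sqrt (ln (real k))
            then real k * (1 * (real k / n) * ln ((real k)\<^sup>2 * ln (real k) / n\<^sup>2)) powr (2 * n / real k)
            else 0)"
    unfolding E_def T1_def T2_def R_def R1_def .
qed


end
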